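(* Let $K_1\subset U(N_1)$ and $K_2\subset U(N_2)$ be compact connected subgroups and let $K=K_1\otimes K_2=\{U_1\otimes U_2\mid U_1\in K_1,U_2\in K_2\}\subset U(N_1N_2)$, where $\otimes$ is the Kronecker product. Let $A=A_1\otimes A_2$ and $C=C_1\otimes C_2$ with $A_i,C_i\in\mathbb{C}^{N_i\times N_i}$, $i=1,2$. Then $$W_K(C,A)=W_{K_1}(C_1,A_1)\cdot W_{K_2}(C_2,A_2)=\{z_1z_2\mid z_1\in W_{K_1}(C_1,A_1),\ z_2\in W_{K_2}(C_2,A_2)\}.$$ In particular, $W_K(C,A)$ is star-shaped (resp. convex) if either $W_{K_1}(C_1,A_1)$ is star-shaped (resp. convex) and $W_{K_2}(C_2,A_2)$ is contained in a ray $\{re^{i\varphi}\mid r\ge 0\}$ of the complex plane (for some fixed $\varphi\in\mathbb{R}$), or vice versa (with the roles of the indices $1$ and $2$ interchanged).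
   Context: For a compact connected subgroup $K\subset U(N)$ and $C,A\in\mathbb{C}^{N\times N}$, the relative $C$-numerical range is $W_K(C,A)=\{\mathrm{tr}(C^\dagger UAU^\dagger)\mid U\in K\}\subset\mathbb{C}$. *)

theory Defs
  imports "HOL-Analysis.Analysis"
begin

definition dagger :: "complex^'n^'n \<Rightarrow> complex^'n^'n" where
  "dagger A = (\<chi> i j. cnj (A $ j $ i))"

definition unitary_mat :: "complex^'n^'n \<Rightarrow> bool" where
  "unitary_mat U \<longleftrightarrow> U ** dagger U = mat 1"

definition compact_connected_unitary_subgroup :: "(complex^'n^'n) set \<Rightarrow> bool" where
  "compact_connected_unitary_subgroup K \<longleftrightarrow>
     K \<subseteq> {U. unitary_mat U} \<and> mat 1 \<in> K \<and>
     (\<forall>U\<in>K. \<forall>V\<in>K. U ** V \<in> K) \<and> (\<forall>U\<in>K. dagger U \<in> K) \<and>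
     compact K \<and> connected K"

definition rel_C_numrange ::
  "(complex^'n^'n) set \<Rightarrow> complex^'n^'n \<Rightarrow> complex^'n^'n \<Rightarrow> complex set" where
  "rel_C_numrange K C A = {trace (dagger C ** U ** A ** dagger U) | U. U \<in> K}"

definition kron :: "complex^'n^'n \<Rightarrow> complex^'m^'m \<Rightarrow> complex^('n \<times> 'm)^('n \<times> 'm)" where
  "kron A B = (\<chi> p q. A $ fst p $ fst q * B $ snd p $ snd q)"

definition in_ray :: "complex set \<Rightarrow> bool" where
  "in_ray S \<longleftrightarrow> (\<exists>\<phi>::real. S \<subseteq> {complex_of_real r * exp (\<i> * complex_of_real \<phi>) | r. r \<ge> 0})"

end

theory Submission imports Defs begin

lemma dagger_kron: "dagger (kron A B) = kron (dagger A) (dagger B)"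
  by (simp add: dagger_def kron_def vec_eq_iff)

lemma sum_pairs: "(\<Sum>k\<in>(UNIV::('a::finite \<times> 'b::finite) set). f (fst k) * g (snd k)) = (\<Sum>i\<in>UNIV. f i) * (\<Sum>j\<in>UNIV. (g j :: complex))"
proof -
  have "(\<Sum>k\<in>(UNIV::('a \<times> 'b) set). f (fst k) * g (snd k)) = (\<Sum>k\<in>UNIV \<times> UNIV. f (fst k) * g (snd k))"
    by (simp only: UNIV_Times_UNIV)
  also have "\<dots> = (\<Sum>(i,j)\<in>UNIV \<times> UNIV. f i * g j)"
    by (simp only: split_def)
  also have "\<dots> = (\<Sum>i\<in>UNIV. \<Sum>j\<in>UNIV. f i * g j)"
    by (rule sum.cartesian_product[symmetric])
  also have "\<dots> = (\<Sum>i\<in>UNIV. f i) * (\<Sum>j\<in>UNIV. g j)"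
    by (simp only: sum_product)
  finally show ?thesis .
qed

lemma kron_mult: "kron A B ** kron C D = kron (A ** C) (B ** D)"
proof -
  have "\<And>p q. (\<Sum>k\<in>UNIV. A $ fst p $ fst k * B $ snd p $ snd k * (C $ fst k $ fst q * D $ snd k $ snd q))
     = (\<Sum>k\<in>UNIV. A $ fst p $ k * C $ k $ fst q) * (\<Sum>k\<in>UNIV. B $ snd p $ k * D $ k $ snd q)"
    by (subst sum_pairs[symmetric]) (simp add: algebra_simps)
  then show ?thesis by (simp add: kron_def matrix_matrix_mult_def vec_eq_iff)
qed

lemma trace_kron: "trace (kron A B) = trace A * trace B"
  unfolding trace_def kron_def using sum_pairs[of "\<lambda>i. A$i$i" "\<lambda>j. B$j$j"] by simp

lemma cont_mult: "continuous_on S f \<Longrightarrow> continuous_on S g \<Longrightarrow> continuous_on S (\<lambda>x. (f x ** g x :: complex^'n::finite^'n))"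
  unfolding matrix_matrix_mult_def
  by (intro continuous_on_vec_lambda continuous_on_sum continuous_on_mult continuous_on_component) auto

lemma cont_dagger: "continuous_on S f \<Longrightarrow> continuous_on S (\<lambda>x. dagger (f x :: complex^'n::finite^'n))"
  unfolding dagger_def
  by (intro continuous_on_vec_lambda continuous_on_cnj continuous_on_component) auto

lemma cont_trace: "continuous_on S f \<Longrightarrow> continuous_on S (\<lambda>x. trace (f x :: complex^'n::finite^'n))"
  unfolding trace_def
  by (intro continuous_on_sum continuous_on_component) auto

lemma cont_f: "continuous_on S (\<lambda>U. trace (dagger C ** U ** A ** dagger U :: complex^'n::finite^'n))"
  by (intro cont_trace cont_mult cont_dagger continuous_on_const continuous_on_id)

lemma ray_interval:
  assumes "in_ray T" "compact T" "connected T" "T \<noteq> {}"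
  obtains a b c where "0 \<le> a" "a \<le> b" "T = (\<lambda>r. complex_of_real r * c) ` {a..b}"
proof -
  obtain \<phi> where \<phi>: "T \<subseteq> {complex_of_real r * exp (\<i> * complex_of_real \<phi>) | r. r \<ge> 0}"
    using assms(1) in_ray_def by auto
  define c where "c = exp (\<i> * complex_of_real \<phi>)"
  have nc: "norm c = 1" unfolding c_def by (simp add: norm_exp_eq_Re)
  have zT: "z = complex_of_real (norm z) * c" if "z \<in> T" for z
  proof -
    have "z \<in> {complex_of_real r * c | r. r \<ge> 0}" using \<phi> that unfolding c_def by (rule subsetD)
    then obtain r where r: "r \<ge> 0" "z = complex_of_real r * c" by blast
    then have "norm z = r" using nc by (simp add: norm_mult)
    then show ?thesis using r by simp
  qed
  have "compact (norm ` T)"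
    by (rule compact_continuous_image[OF continuous_on_norm_id assms(2)])
  moreover have "connected (norm ` T)"
    by (rule connected_continuous_image[OF continuous_on_norm_id assms(3)])
  ultimately obtain a b where ab: "norm ` T = {a..b}" using connected_compact_interval_1 by metis
  then have hab: "a \<le> b" using assms(4) by auto
  have h0: "0 \<le> a"
  proof -
    have "a \<in> norm ` T" using ab hab by auto
    then show ?thesis by auto
  qed
  have hT: "T = (\<lambda>r. complex_of_real r * c) ` {a..b}"
  proof
    show "T \<subseteq> (\<lambda>r. complex_of_real r * c) ` {a..b}"
    proof
      fix z assume "z \<in> T"
      then have "norm z \<in> {a..b}" "z = complex_of_real (norm z) * c" using ab zT by auto
      then show "z \<in> (\<lambda>r. complex_of_real r * c) ` {a..b}" by blast
    qed
    show "(\<lambda>r. complex_of_real r * c) ` {a..b} \<subseteq> T"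
    proof
      fix y assume "y \<in> (\<lambda>r. complex_of_real r * c) ` {a..b}"
      then obtain r where r: "r \<in> {a..b}" "y = complex_of_real r * c" by auto
      then obtain z where "z \<in> T" "r = norm z" using ab by (metis imageE)
      then show "y \<in> T" using r zT by metis
    qed
  qed
  show ?thesis by (rule that[OF h0 hab hT])
qed

lemma starlike_prod:
  assumes "starlike S" "0 \<le> a" "a \<le> b"
  shows "starlike {z1 * z2 | z1 z2. z1 \<in> S \<and> z2 \<in> (\<lambda>r. complex_of_real r * c) ` {a..b}}"
    (is "starlike ?P")
proof -
  have memP: "z * (complex_of_real r * c) \<in> ?P" if "z \<in> S" "a \<le> r" "r \<le> b" for z r
  proof -
    have "complex_of_real r * c \<in> (\<lambda>r. complex_of_real r * c) ` {a..b}" using that by auto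
    then show ?thesis using that(1) by blast
  qed
  from assms obtain z0 where z0: "z0 \<in> S" "\<forall>x\<in>S. closed_segment z0 x \<subseteq> S"
    unfolding starlike_def by auto
  show ?thesis unfolding starlike_def
  proof (intro bexI ballI subsetI)
    show "z0 * (complex_of_real a * c) \<in> ?P" using z0 assms by (intro memP) auto
    fix w y assume w: "w \<in> ?P" and y: "y \<in> closed_segment (z0 * (complex_of_real a * c)) w"
    from w obtain z1 r where z1: "z1 \<in> S" "a \<le> r" "r \<le> b" "w = z1 * (complex_of_real r * c)" by auto
    from y obtain t where t: "0 \<le> t" "t \<le> 1" "y = (1-t) *\<^sub>R (z0 * (complex_of_real a * c)) + t *\<^sub>R w"
      unfolding closed_segment_def by auto
    have yeq: "y = (complex_of_real ((1-t)*a) * z0 + complex_of_real (t*r) * z1) * c"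
      using t z1 by (simp add: scaleR_conv_of_real algebra_simps)
    define s where "s = (1-t)*a + t*r"
    have "t*a \<le> t*r" using t z1 by (simp add: mult_left_mono)
    have "(1-t)*a \<le> (1-t)*r" using t z1 by (simp add: mult_left_mono)
    have nn1: "0 \<le> (1-t)*a" using t assms by simp
    have nn2: "0 \<le> t*r" using t z1 assms by simp
    have s: "a \<le> s" "s \<le> b"
      using \<open>t*a \<le> t*r\<close> \<open>(1-t)*a \<le> (1-t)*r\<close> z1 by (auto simp: s_def algebra_simps)
    show "y \<in> ?P"
    proof (cases "s = 0")
      case True
      then have "(1-t)*a = 0" "t*r = 0" using nn1 nn2 True unfolding s_def by linarith+
      then have h: "complex_of_real ((1-t)*a) = 0" "complex_of_real (t*r) = 0" by simp_all
      have "y = z0 * (complex_of_real s * c)" unfolding yeq h True by simp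
      then show ?thesis using memP[OF z0(1) s] by simp
    next
      case False
      then have spos: "s > 0" using s assms by auto
      define u where "u = t*r/s"
      have le: "t*r \<le> s" using nn1 nn2 unfolding s_def by linarith
      have u01: "0 \<le> u" "u \<le> 1" using spos nn2 le by (simp_all add: u_def divide_le_eq)
      have su2: "s*u = t*r" using spos by (simp add: u_def)
      have "s*(1-u) = s - s*u" by (simp add: right_diff_distrib)
      then have su1: "s*(1-u) = (1-t)*a" using su2 unfolding s_def by linarith
      define w' where "w' = (1-u) *\<^sub>R z0 + u *\<^sub>R z1"
      have "w' \<in> closed_segment z0 z1" unfolding w'_def closed_segment_def using u01 by blast
      then have w'S: "w' \<in> S" using z0 z1 by blast
      have "complex_of_real s * w' = complex_of_real (s*(1-u)) * z0 + complex_of_real (s*u) * z1"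
        unfolding w'_def scaleR_conv_of_real by (simp only: of_real_mult distrib_left mult.assoc)
      then have "y = (complex_of_real s * w') * c" unfolding yeq su1[symmetric] su2[symmetric] by simp
      then have "y = w' * (complex_of_real s * c)" by (simp add: ac_simps)
      then show ?thesis using memP[OF w'S s] by simp
    qed
  qed
qed

lemma convex_prod:
  assumes "convex S" "0 \<le> a" "a \<le> b"
  shows "convex {z1 * z2 | z1 z2. z1 \<in> S \<and> z2 \<in> (\<lambda>r. complex_of_real r * c) ` {a..b}}"
    (is "convex ?P")
proof -
  have memP: "z * (complex_of_real r * c) \<in> ?P" if "z \<in> S" "a \<le> r" "r \<le> b" for z r
  proof -
    have "complex_of_real r * c \<in> (\<lambda>r. complex_of_real r * c) ` {a..b}" using that by auto
    then show ?thesis using that(1) by blast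
  qed
  show ?thesis
  proof (rule convexI)
    fix x y and p q :: real
    assume x: "x \<in> ?P" and y: "y \<in> ?P" and "0 \<le> p" "0 \<le> q" "p + q = 1"
    then have pq: "0 \<le> p \<and> 0 \<le> q \<and> p + q = 1" by simp
    from x obtain z1 r1 where z1: "z1 \<in> S" "a \<le> r1" "r1 \<le> b" "x = z1 * (complex_of_real r1 * c)" by auto
    from y obtain z2 r2 where z2: "z2 \<in> S" "a \<le> r2" "r2 \<le> b" "y = z2 * (complex_of_real r2 * c)" by auto
    have yeq: "p *\<^sub>R x + q *\<^sub>R y = (complex_of_real (p*r1) * z1 + complex_of_real (q*r2) * z2) * c"
      using z1 z2 by (simp add: scaleR_conv_of_real algebra_simps)
    define s where "s = p*r1 + q*r2"
    have nn1: "0 \<le> p*r1" using pq z1 assms by simp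
    have nn2: "0 \<le> q*r2" using pq z2 assms by simp
    have "p*a \<le> p*r1" "q*a \<le> q*r2" using pq z1 z2 by (simp_all add: mult_left_mono)
    moreover have "p*r1 \<le> p*b" "q*r2 \<le> q*b" using pq z1 z2 by (simp_all add: mult_left_mono)
    ultimately have "p*a + q*a \<le> s" "s \<le> p*b + q*b" by (auto simp: s_def)
    moreover have "p*a + q*a = (p+q)*a" "p*b + q*b = (p+q)*b" by (simp_all add: distrib_right)
    ultimately have s: "a \<le> s" "s \<le> b" using pq by simp_all
    show "p *\<^sub>R x + q *\<^sub>R y \<in> ?P"
    proof (cases "s = 0")
      case True
      then have "p*r1 = 0" "q*r2 = 0" using nn1 nn2 True unfolding s_def by linarith+
      then have h: "complex_of_real (p*r1) = 0" "complex_of_real (q*r2) = 0" by simp_all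
      have "p *\<^sub>R x + q *\<^sub>R y = z1 * (complex_of_real s * c)" unfolding yeq h True by simp
      then show ?thesis using memP[OF z1(1) s] by simp
    next
      case False
      then have spos: "s > 0" using s assms by auto
      define u where "u = q*r2/s"
      have le: "q*r2 \<le> s" using nn1 nn2 unfolding s_def by linarith
      have u01: "0 \<le> u" "u \<le> 1" using spos nn2 le by (simp_all add: u_def divide_le_eq)
      have su2: "s*u = q*r2" using spos by (simp add: u_def)
      have "s*(1-u) = s - s*u" by (simp add: right_diff_distrib)
      then have su1: "s*(1-u) = p*r1" using su2 unfolding s_def by linarith
      define w' where "w' = (1-u) *\<^sub>R z1 + u *\<^sub>R z2"
      have w'S: "w' \<in> S" unfolding w'_def using assms(1) z1 z2 u01 by (simp add: convex_def)
      have "complex_of_real s * w' = complex_of_real (s*(1-u)) * z1 + complex_of_real (s*u) * z2"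
        unfolding w'_def scaleR_conv_of_real by (simp only: of_real_mult distrib_left mult.assoc)
      then have "p *\<^sub>R x + q *\<^sub>R y = (complex_of_real s * w') * c" unfolding yeq su1[symmetric] su2[symmetric] by simp
      then have "p *\<^sub>R x + q *\<^sub>R y = w' * (complex_of_real s * c)" by (simp add: ac_simps)
      then show ?thesis using memP[OF w'S s] by simp
    qed
  qed
qed

lemma prodset_sub:
  "{z1 * z2 | z1 z2. z1 \<in> S \<and> z2 \<in> T} \<subseteq> {z1 * z2 | z1 z2. z1 \<in> T \<and> z2 \<in> (S::complex set)}"
proof
  fix x assume "x \<in> {z1 * z2 | z1 z2. z1 \<in> S \<and> z2 \<in> T}"
  then obtain z1 z2 where h: "x = z1 * z2" "z1 \<in> S" "z2 \<in> T" by blast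
  then have "x = z2 * z1" by (simp add: mult.commute)
  then show "x \<in> {z1 * z2 | z1 z2. z1 \<in> T \<and> z2 \<in> (S::complex set)}" using h by blast
qed

lemma prodset_comm:
  "{z1 * z2 | z1 z2. z1 \<in> S \<and> z2 \<in> T} = {z1 * z2 | z1 z2. z1 \<in> T \<and> z2 \<in> (S::complex set)}"
  by (rule subset_antisym[OF prodset_sub prodset_sub])

lemma W_props:
  assumes "compact_connected_unitary_subgroup K"
  shows "compact (rel_C_numrange K C A)" "connected (rel_C_numrange K C A)" "rel_C_numrange K C A \<noteq> {}"
proof -
  have eq: "rel_C_numrange K C A = (\<lambda>U. trace (dagger C ** U ** A ** dagger U)) ` K"
    unfolding rel_C_numrange_def by auto
  from assms have K: "compact K" "connected K" "mat 1 \<in> K"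
    unfolding compact_connected_unitary_subgroup_def by auto
  show "compact (rel_C_numrange K C A)" unfolding eq
    by (rule compact_continuous_image[OF cont_f K(1)])
  show "connected (rel_C_numrange K C A)" unfolding eq
    by (rule connected_continuous_image[OF cont_f K(2)])
  show "rel_C_numrange K C A \<noteq> {}" unfolding eq using K(3) by auto
qed

theorem proposition2p9:
  fixes K1 :: "(complex^'n::finite^'n) set" and K2 :: "(complex^'m::finite^'m) set"
    and A1 C1 :: "complex^'n^'n" and A2 C2 :: "complex^'m^'m"
  assumes "compact_connected_unitary_subgroup K1"
    and "compact_connected_unitary_subgroup K2"
  defines "K \<equiv> {kron U1 U2 | U1 U2. U1 \<in> K1 \<and> U2 \<in> K2}"
  shows "rel_C_numrange K (kron C1 C2) (kron A1 A2) =
           {z1 * z2 | z1 z2. z1 \<in> rel_C_numrange K1 C1 A1 \<and> z2 \<in> rel_C_numrange K2 C2 A2}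
       \<and> ((starlike (rel_C_numrange K1 C1 A1) \<and> in_ray (rel_C_numrange K2 C2 A2)) \<or>
         (starlike (rel_C_numrange K2 C2 A2) \<and> in_ray (rel_C_numrange K1 C1 A1))
         \<longrightarrow> starlike (rel_C_numrange K (kron C1 C2) (kron A1 A2)))
       \<and> ((convex (rel_C_numrange K1 C1 A1) \<and> in_ray (rel_C_numrange K2 C2 A2)) \<or>
         (convex (rel_C_numrange K2 C2 A2) \<and> in_ray (rel_C_numrange K1 C1 A1))
         \<longrightarrow> convex (rel_C_numrange K (kron C1 C2) (kron A1 A2)))"
proof -
  let ?W1 = "rel_C_numrange K1 C1 A1" and ?W2 = "rel_C_numrange K2 C2 A2"
  have E: "rel_C_numrange K (kron C1 C2) (kron A1 A2) = {z1 * z2 | z1 z2. z1 \<in> ?W1 \<and> z2 \<in> ?W2}"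
  proof -
    have key: "trace (dagger (kron C1 C2) ** kron U1 U2 ** kron A1 A2 ** dagger (kron U1 U2))
       = trace (dagger C1 ** U1 ** A1 ** dagger U1) * trace (dagger C2 ** U2 ** A2 ** dagger U2)" for U1 U2
      by (simp add: dagger_kron kron_mult trace_kron)
    show ?thesis
    proof (intro subset_antisym subsetI)
      fix x assume "x \<in> rel_C_numrange K (kron C1 C2) (kron A1 A2)"
      then obtain U where "U \<in> K" "x = trace (dagger (kron C1 C2) ** U ** kron A1 A2 ** dagger U)"
        unfolding rel_C_numrange_def by blast
      then obtain U1 U2 where u: "U1 \<in> K1" "U2 \<in> K2"
        "x = trace (dagger C1 ** U1 ** A1 ** dagger U1) * trace (dagger C2 ** U2 ** A2 ** dagger U2)"
        unfolding K_def using key by blast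
      have "trace (dagger C1 ** U1 ** A1 ** dagger U1) \<in> ?W1"
        unfolding rel_C_numrange_def using u by blast
      moreover have "trace (dagger C2 ** U2 ** A2 ** dagger U2) \<in> ?W2"
        unfolding rel_C_numrange_def using u by blast
      ultimately show "x \<in> {z1 * z2 | z1 z2. z1 \<in> ?W1 \<and> z2 \<in> ?W2}" using u(3) by blast
    next
      fix x assume "x \<in> {z1 * z2 | z1 z2. z1 \<in> ?W1 \<and> z2 \<in> ?W2}"
      then obtain z1 z2 where z: "x = z1 * z2" "z1 \<in> ?W1" "z2 \<in> ?W2" by blast
      then obtain U1 U2 where u: "U1 \<in> K1" "U2 \<in> K2" "z1 = trace (dagger C1 ** U1 ** A1 ** dagger U1)"
        "z2 = trace (dagger C2 ** U2 ** A2 ** dagger U2)"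
        unfolding rel_C_numrange_def by blast
      have "kron U1 U2 \<in> K" unfolding K_def using u by blast
      moreover have "x = trace (dagger (kron C1 C2) ** kron U1 U2 ** kron A1 A2 ** dagger (kron U1 U2))"
        using key z u by simp
      ultimately show "x \<in> rel_C_numrange K (kron C1 C2) (kron A1 A2)"
        unfolding rel_C_numrange_def by blast
    qed
  qed
  have st: "starlike {z1 * z2 | z1 z2. z1 \<in> S \<and> z2 \<in> T}"
    if H: "starlike S" "in_ray T" "compact T" "connected T" "T \<noteq> {}" for S T
  proof -
    obtain a b c where "0 \<le> a" "a \<le> b" "T = (\<lambda>r. complex_of_real r * c) ` {a..b}"
      using ray_interval[OF H(2-5)] by blast
    then show ?thesis using starlike_prod[OF H(1)] by simp
  qed
  have cv: "convex {z1 * z2 | z1 z2. z1 \<in> S \<and> z2 \<in> T}"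
    if H: "convex S" "in_ray T" "compact T" "connected T" "T \<noteq> {}" for S T
  proof -
    obtain a b c where "0 \<le> a" "a \<le> b" "T = (\<lambda>r. complex_of_real r * c) ` {a..b}"
      using ray_interval[OF H(2-5)] by blast
    then show ?thesis using convex_prod[OF H(1)] by simp
  qed
  note P1 = W_props[OF assms(1), of C1 A1] and P2 = W_props[OF assms(2), of C2 A2]
  let ?P = "{z1 * z2 | z1 z2. z1 \<in> ?W1 \<and> z2 \<in> ?W2}"
  have C: "?P = {z1 * z2 | z1 z2. z1 \<in> ?W2 \<and> z2 \<in> ?W1}" by (rule prodset_comm)
  have S1: "starlike ?P" if "starlike ?W1" "in_ray ?W2"
    by (rule st[OF that P2])
  have S2: "starlike ?P" if "starlike ?W2" "in_ray ?W1"
    unfolding C by (rule st[OF that P1])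
  have V1: "convex ?P" if "convex ?W1" "in_ray ?W2"
    by (rule cv[OF that P2])
  have V2: "convex ?P" if "convex ?W2" "in_ray ?W1"
    unfolding C by (rule cv[OF that P1])
  show ?thesis unfolding E
  proof (intro conjI impI)
    show "?P = ?P" by (rule refl)
  next
    assume "starlike ?W1 \<and> in_ray ?W2 \<or> starlike ?W2 \<and> in_ray ?W1"
    then show "starlike ?P"
    proof (elim disjE conjE)
      assume "starlike ?W1" "in_ray ?W2" then show ?thesis by (rule S1)
    next
      assume "starlike ?W2" "in_ray ?W1" then show ?thesis by (rule S2)
    qed
  next
    assume "convex ?W1 \<and> in_ray ?W2 \<or> convex ?W2 \<and> in_ray ?W1"
    then show "convex ?P"
    proof (elim disjE conjE)
      assume "convex ?W1" "in_ray ?W2" then show ?thesis by (rule V1)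
    next
      assume "convex ?W2" "in_ray ?W1" then show ?thesis by (rule V2)
    qed
  qed
qed

end
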